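(* For $\epsilon > 0$ let $f_\epsilon(\theta) = \epsilon + \cos\theta$, viewed as a holomorphic function on the complex cylinder $\mathcal C = \mathbb C / 2\pi\mathbb Z$. For a piecewise-$C^1$ closed curve $\gamma$ in $\mathcal C$ that is homotopic to the real circle $\{\theta : \Im\theta = 0\}$ (traversed once in the direction of increasing $\Re\theta$), define $$Z_\gamma(\epsilon) = \int_\gamma f_\epsilon(\theta)\,\mathrm d\theta,\qquad Z_{Q,\gamma}(\epsilon) = \int_\gamma |f_\epsilon(\theta)|\,|\mathrm d\theta|,\qquad \langle\sigma\rangle_\gamma(\epsilon) = \frac{Z_\gamma(\epsilon)}{Z_{Q,\gamma}(\epsilon)}.$$ Then $Z_\gamma(\epsilon) = 2\pi\epsilon$ for every such $\gamma$, and there is a constant $C$ such that for all sufficiently small $\epsilon>0$ and every such curve $\gamma$, $$\langle\sigma\rangle_\gamma(\epsilon) \le \frac{\pi}{2}\,\epsilon + C\epsilon^2 .$$ In particular no such deformation of the contour achieves an average sign larger than $\frac{\pi}{2}\epsilon + O(\epsilon^2)$, the same order as on the real circle.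
   Context: This models a one-site "lattice" with partition function $Z(\epsilon)=\int_0^{2\pi}(\epsilon+\cos\theta)\,\mathrm d\theta$, i.e. Boltzmann factor $e^{-S}$ with $S_\epsilon(\theta) = -\log(\epsilon+\cos\theta)$. The "average sign" on an integration contour is the ratio of the partition function (integral of the Boltzmann factor along the contour) to the quenched partition function (integral of the absolute value of the Boltzmann factor with respect to arc length along the contour). Contour deformations are homotopies within the complexified domain of integration, the cylinder $\mathbb C/2\pi\mathbb Z$. *)

theory Defs
  imports "HOL-Complex_Analysis.Complex_Analysis"
begin

text \<open>Curves on the cylinder C/2piZ are represented by their lifts to the complex
plane: a path gamma on [0,1] in the complex plane whose projection to the cylinder
is a closed curve (gamma 1 - gamma 0 in 2 pi Z).\<close>

definition f_eps :: "real \<Rightarrow> complex \<Rightarrow> complex" where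
  "f_eps \<epsilon> \<theta> = complex_of_real \<epsilon> + cos \<theta>"

definition cyl_closed :: "(real \<Rightarrow> complex) \<Rightarrow> bool" where
  "cyl_closed g \<longleftrightarrow> (\<exists>k::int. g 1 - g 0 = complex_of_real (2 * pi * of_int k))"

definition cyl_homotopic_to_real_circle :: "(real \<Rightarrow> complex) \<Rightarrow> bool" where
  "cyl_homotopic_to_real_circle g \<longleftrightarrow>
     (\<exists>H :: real \<times> real \<Rightarrow> complex.
        continuous_on ({0..1} \<times> {0..1}) H \<and>
        (\<forall>t\<in>{0..1}. H (0, t) = g t \<and> H (1, t) = complex_of_real (2 * pi * t)) \<and>
        (\<forall>s\<in>{0..1}. \<exists>k::int. H (s, 1) - H (s, 0) = complex_of_real (2 * pi * of_int k)))"

definition admissible_contour :: "(real \<Rightarrow> complex) \<Rightarrow> bool" where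
  "admissible_contour g \<longleftrightarrow> valid_path g \<and> cyl_closed g \<and> cyl_homotopic_to_real_circle g"

definition Z_part :: "real \<Rightarrow> (real \<Rightarrow> complex) \<Rightarrow> complex" where
  "Z_part \<epsilon> g = contour_integral g (f_eps \<epsilon>)"

definition Z_quenched :: "real \<Rightarrow> (real \<Rightarrow> complex) \<Rightarrow> real" where
  "Z_quenched \<epsilon> g = integral {0..1} (\<lambda>t. cmod (f_eps \<epsilon> (g t)) * norm (vector_derivative g (at t)))"

definition avg_sign :: "real \<Rightarrow> (real \<Rightarrow> complex) \<Rightarrow> complex" where
  "avg_sign \<epsilon> g = Z_part \<epsilon> g / complex_of_real (Z_quenched \<epsilon> g)"

end

theory Submission
  imports Defs
begin

definition FF :: "real \<Rightarrow> complex \<Rightarrow> complex" where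
  "FF e z = complex_of_real e * z + sin z"

lemma FF_der: "(FF e has_field_derivative f_eps e z) (at z within S)"
  unfolding f_eps_def FF_def by (auto intro!: derivative_eq_intros)

lemma seg_integral:
  assumes g: "valid_path g" and ab: "0 \<le> a" "a \<le> b" "b \<le> 1"
  shows "((\<lambda>t. f_eps e (g t) * vector_derivative g (at t)) has_integral (FF e (g b) - FF e (g a))) {a..b}"
proof -
  have c: "(f_eps e has_contour_integral (FF e (pathfinish g) - FF e (pathstart g))) g"
    by (rule contour_integral_primitive[OF FF_der g subset_UNIV])
  hence ci: "f_eps e contour_integrable_on g" by (auto simp: contour_integrable_on_def)
  have vs: "valid_path (subpath a b g)" using valid_path_subpath[OF g] ab by auto
  have 1: "(f_eps e has_contour_integral (FF e (g b) - FF e (g a))) (subpath a b g)"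
    using contour_integral_primitive[OF FF_der vs subset_UNIV] by simp
  have 2: "(f_eps e has_contour_integral integral {a..b} (\<lambda>t. f_eps e (g t) * vector_derivative g (at t))) (subpath a b g)"
    using has_contour_integral_subpath[OF ci g] ab by auto
  have eq: "integral {a..b} (\<lambda>t. f_eps e (g t) * vector_derivative g (at t)) = FF e (g b) - FF e (g a)"
    using has_contour_integral_unique[OF 2 1] .
  have "(\<lambda>t. f_eps e (g t) * vector_derivative g (at t)) integrable_on {a..b}"
    using ci unfolding contour_integrable_on
    by (rule integrable_on_subinterval) (use ab in auto)
  then show ?thesis using eq by (metis has_integral_integral)
qed

lemma seg_bound:
  assumes g: "valid_path g" and ab: "0 \<le> a" "a \<le> b" "b \<le> 1"
    and k: "(\<lambda>t. cmod (f_eps e (g t)) * norm (vector_derivative g (at t))) integrable_on {0..1}"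
  shows "\<bar>Re (FF e (g b)) - Re (FF e (g a))\<bar> \<le>
     integral {a..b} (\<lambda>t. cmod (f_eps e (g t)) * norm (vector_derivative g (at t)))"
proof -
  have h: "((\<lambda>t. f_eps e (g t) * vector_derivative g (at t)) has_integral (FF e (g b) - FF e (g a))) {a..b}"
    by (rule seg_integral[OF g ab])
  have ki: "(\<lambda>t. cmod (f_eps e (g t)) * norm (vector_derivative g (at t))) integrable_on {a..b}"
    using k by (rule integrable_on_subinterval) (use ab in auto)
  have "norm (integral {a..b} (\<lambda>t. f_eps e (g t) * vector_derivative g (at t))) \<le>
     integral {a..b} (\<lambda>t. cmod (f_eps e (g t)) * norm (vector_derivative g (at t)))"
    by (rule integral_norm_bound_integral[OF has_integral_integrable[OF h] ki]) (simp add: norm_mult)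
  then have "norm (FF e (g b) - FF e (g a)) \<le> integral {a..b} (\<lambda>t. cmod (f_eps e (g t)) * norm (vector_derivative g (at t)))"
    using integral_unique[OF h] by simp
  moreover have "\<bar>Re (FF e (g b)) - Re (FF e (g a))\<bar> \<le> norm (FF e (g b) - FF e (g a))"
    using abs_Re_le_cmod[of "FF e (g b) - FF e (g a)"] by simp
  ultimately show ?thesis by linarith
qed

lemma admissible_shift:
  assumes "admissible_contour g"
  shows "g 1 = g 0 + complex_of_real (2 * pi)"
proof -
  obtain H :: "real \<times> real \<Rightarrow> complex" where Hc: "continuous_on ({0..1} \<times> {0..1}) H"
    and H0: "\<forall>t\<in>{0..1}. H (0, t) = g t \<and> H (1, t) = complex_of_real (2 * pi * t)"
    and Hk: "\<forall>s\<in>{0..1}. \<exists>k::int. H (s, 1) - H (s, 0) = complex_of_real (2 * pi * of_int k)"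
    using assms unfolding admissible_contour_def cyl_homotopic_to_real_circle_def by blast
  define q where "q s = H (s, 1) - H (s, 0)" for s
  have c1: "continuous_on {0..1} (\<lambda>s. H (s, 1))"
    by (rule continuous_on_compose2[OF Hc]) (auto intro!: continuous_intros)
  have c0: "continuous_on {0..1} (\<lambda>s. H (s, 0))"
    by (rule continuous_on_compose2[OF Hc]) (auto intro!: continuous_intros)
  have qc: "continuous_on {0..1} q" unfolding q_def using c1 c0 by (intro continuous_intros)
  have "q constant_on {0..1}"
  proof (rule continuous_discrete_range_constant[OF _ qc])
    show "connected {0..1::real}" by simp
    fix x :: real assume x: "x \<in> {0..1}"
    obtain k :: int where k: "q x = complex_of_real (2 * pi * of_int k)" using Hk x unfolding q_def by blast
    show "\<exists>e>0. \<forall>y. y \<in> {0..1} \<and> q y \<noteq> q x \<longrightarrow> e \<le> norm (q y - q x)"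
    proof (intro exI[of _ "2*pi"] conjI allI impI)
      fix y assume y: "y \<in> {0..1} \<and> q y \<noteq> q x"
      obtain k' :: int where k': "q y = complex_of_real (2 * pi * of_int k')" using Hk y unfolding q_def by blast
      have "k' \<noteq> k" using y k k' by auto
      hence "1 \<le> \<bar>k' - k\<bar>" by linarith
      hence "1 \<le> \<bar>real_of_int k' - real_of_int k\<bar>" by (metis of_int_1_le_iff of_int_abs of_int_diff)
      hence "2*pi*1 \<le> 2*pi*\<bar>real_of_int k' - real_of_int k\<bar>" by (intro mult_left_mono) auto
      also have "\<dots> = \<bar>2*pi*(real_of_int k' - real_of_int k)\<bar>" by (simp add: abs_mult)
      also have "\<dots> = norm (q y - q x)" unfolding k k'
        by (metis norm_of_real of_real_diff right_diff_distrib)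
      finally show "2*pi \<le> norm (q y - q x)" by simp
    qed simp
  qed
  hence "q 0 = q 1" unfolding constant_on_def by force
  moreover have "q 0 = g 1 - g 0" using H0 q_def by auto
  moreover have "q 1 = complex_of_real (2*pi)" using H0 q_def by auto
  ultimately show ?thesis by (metis add.commute diff_add_cancel)
qed

lemma sin_top: "sin (pi/2 + 2*pi* of_int j) = 1"
  by (simp only: sin_add cos_int_2pin sin_int_2pin) simp

lemma Re_FF: "Re (FF e z) = e * Re z + sin (Re z) * cosh (Im z)"
  unfolding FF_def by (simp add: Re_sin cosh_def)

lemma quenched_ge4:
  assumes adm: "admissible_contour g" and e: "0 < e"
    and k: "(\<lambda>t. cmod (f_eps e (g t)) * norm (vector_derivative g (at t))) integrable_on {0..1}"
  shows "4 \<le> Z_quenched e g"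
proof -
  define K where "K a b = integral {a..b} (\<lambda>t. cmod (f_eps e (g t)) * norm (vector_derivative g (at t)))" for a b
  define R where "R t = Re (FF e (g t))" for t
  have g: "valid_path g" using adm admissible_contour_def by blast
  have shift: "g 1 = g 0 + complex_of_real (2 * pi)" using admissible_shift[OF adm] .
  have R1: "R 1 = R 0 + 2 * pi * e"
    unfolding R_def Re_FF shift using sin_periodic[of "Re (g 0)"] by (simp add: algebra_simps)
  have bnd: "\<bar>R b - R a\<bar> \<le> K a b" if "0 \<le> a" "a \<le> b" "b \<le> 1" for a b
    unfolding R_def K_def using seg_bound[OF g that k] .
  have comb: "K a b + K b c = K a c" if "0 \<le> a" "a \<le> b" "b \<le> c" "c \<le> 1" for a b c
    unfolding K_def
    by (rule Henstock_Kurzweil_Integration.integral_combine) (use that in \<open>auto intro: integrable_on_subinterval[OF k]\<close>)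
  have Zq: "Z_quenched e g = K 0 1" unfolding Z_quenched_def K_def ..
  define x where "x t = Re (g t)" for t
  have xc: "continuous_on {0..1} x"
    unfolding x_def using g valid_path_imp_path path_def by (auto intro!: continuous_intros)
  have x1: "x 1 = x 0 + 2 * pi" unfolding x_def shift by simp
  have top: "R t \<ge> e * x t + 1" if "x t = pi/2 + 2*pi* of_int j" for t j
  proof -
    have "sin (x t) = 1" unfolding that by (rule sin_top)
    then show ?thesis unfolding R_def Re_FF x_def[symmetric] using cosh_real_ge_1[of "Im (g t)"] by simp
  qed
  have bot: "R t \<le> e * x t - 1" if "x t = pi/2 + 2*pi* of_int j + pi \<or> x t = pi/2 + 2*pi* of_int j - pi" for t j
  proof -
    have "sin (pi/2 + 2*pi* of_int j) = 1" by (rule sin_top)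
    then have "sin (x t) = -1" using that by (auto simp only: sin_periodic_pi sin_minus_pi)
    then show ?thesis unfolding R_def Re_FF x_def[symmetric] using cosh_real_ge_1[of "Im (g t)"] by simp
  qed
  define j where "j = \<lceil>(x 0 - pi/2) / (2*pi)\<rceil>"
  define T where "T = pi/2 + 2*pi* of_int j"
  have T1: "x 0 \<le> T"
  proof -
    have "(x 0 - pi/2) / (2*pi) \<le> of_int j" unfolding j_def by linarith
    then show ?thesis unfolding T_def using pi_gt_zero by (simp add: divide_le_eq algebra_simps)
  qed
  have T2: "T < x 0 + 2*pi"
  proof -
    have "of_int j < (x 0 - pi/2) / (2*pi) + 1" unfolding j_def by linarith
    then have "2*pi* of_int j < 2*pi*((x 0 - pi/2) / (2*pi) + 1)"
      using pi_gt_zero by (intro mult_strict_left_mono) auto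
    also have "\<dots> = x 0 - pi/2 + 2*pi" using pi_gt_zero by (simp add: field_simps)
    finally show ?thesis unfolding T_def by linarith
  qed
  have ivt: "\<exists>s\<in>{a..1}. x s = y" if "0 \<le> a" "a \<le> 1" "x a \<le> y" "y \<le> x 1" for a y
    using IVT'[of x a y 1] that continuous_on_subset[OF xc] by auto
  show ?thesis
  proof (cases "x 0 \<le> T - pi")
    case True
    obtain s1 where s1: "s1 \<in> {0..1}" "x s1 = T - pi" using ivt[of 0 "T - pi"] True T2 x1 pi_gt_zero by auto
    obtain s2 where s2: "s2 \<in> {s1..1}" "x s2 = T" using ivt[of s1 T] s1 T2 x1 by auto
    have b1: "R s1 \<le> e * (T - pi) - 1" using bot[of s1 j] s1 T_def by auto
    have t2: "R s2 \<ge> e * T + 1" using top[of s2 j] s2 T_def by auto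
    have "K 0 1 = K 0 s1 + K s1 s2 + K s2 1" using comb s1 s2 by (smt (verit) atLeastAtMost_iff)
    moreover have "\<bar>R s1 - R 0\<bar> \<le> K 0 s1" "\<bar>R s2 - R s1\<bar> \<le> K s1 s2" "\<bar>R 1 - R s2\<bar> \<le> K s2 1"
      using bnd s1 s2 by auto
    ultimately show ?thesis unfolding Zq using R1 b1 t2 right_diff_distrib[of e T pi] mult.commute[of pi e] mult.assoc[of 2 pi e] by linarith
  next
    case False
    obtain s1 where s1: "s1 \<in> {0..1}" "x s1 = T" using ivt[of 0 T] T1 T2 x1 by auto
    obtain s2 where s2: "s2 \<in> {s1..1}" "x s2 = T + pi" using ivt[of s1 "T + pi"] s1 False x1 by auto
    have t1: "R s1 \<ge> e * T + 1" using top[of s1 j] s1 T_def by auto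
    have b2: "R s2 \<le> e * (T + pi) - 1" using bot[of s2 j] s2 T_def by auto
    have "K 0 1 = K 0 s1 + K s1 s2 + K s2 1" using comb s1 s2 by (smt (verit) atLeastAtMost_iff)
    moreover have "\<bar>R s1 - R 0\<bar> \<le> K 0 s1" "\<bar>R s2 - R s1\<bar> \<le> K s1 s2" "\<bar>R 1 - R s2\<bar> \<le> K s2 1"
      using bnd s1 s2 by auto
    ultimately show ?thesis unfolding Zq using R1 t1 b2 distrib_left[of e T pi] mult.commute[of pi e] mult.assoc[of 2 pi e] by linarith
  qed
qed

lemma sin_shift2pi: "sin (z + complex_of_real (2*pi)) = sin z"
  by (simp add: sin_add flip: cos_of_real sin_of_real)

lemma Z_part_val:
  assumes "admissible_contour g"
  shows "Z_part e g = complex_of_real (2 * pi * e)"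
proof -
  have g: "valid_path g" using assms admissible_contour_def by blast
  have "(f_eps e has_contour_integral (FF e (pathfinish g) - FF e (pathstart g))) g"
    by (rule contour_integral_primitive[OF FF_der g subset_UNIV])
  hence "Z_part e g = FF e (g 1) - FF e (g 0)"
    unfolding Z_part_def by (simp add: contour_integral_unique pathfinish_def pathstart_def)
  also have "\<dots> = complex_of_real (2 * pi * e)"
    unfolding admissible_shift[OF assms] FF_def sin_shift2pi
    by (simp add: algebra_simps)
  finally show ?thesis .
qed

theorem mainTheorem1:
  shows "(\<forall>\<epsilon>>0. \<forall>g. admissible_contour g \<longrightarrow> Z_part \<epsilon> g = complex_of_real (2 * pi * \<epsilon>)) \<and>
         (\<exists>C::real. \<exists>\<epsilon>0>0. \<forall>\<epsilon>. 0 < \<epsilon> \<and> \<epsilon> < \<epsilon>0 \<longrightarrow>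
            (\<forall>g. admissible_contour g \<longrightarrow> Re (avg_sign \<epsilon> g) \<le> pi / 2 * \<epsilon> + C * \<epsilon>\<^sup>2))"
proof (intro conjI)
  show "\<forall>\<epsilon>>0. \<forall>g. admissible_contour g \<longrightarrow> Z_part \<epsilon> g = complex_of_real (2 * pi * \<epsilon>)"
    using Z_part_val by blast
  show "\<exists>C::real. \<exists>\<epsilon>0>0. \<forall>\<epsilon>. 0 < \<epsilon> \<and> \<epsilon> < \<epsilon>0 \<longrightarrow>
            (\<forall>g. admissible_contour g \<longrightarrow> Re (avg_sign \<epsilon> g) \<le> pi / 2 * \<epsilon> + C * \<epsilon>\<^sup>2)"
  proof -
   have main: "Re (avg_sign e g) \<le> pi / 2 * e + 0 * e\<^sup>2" if e: "0 < e \<and> e < 1" and adm: "admissible_contour g" for e g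
   proof -
    have av: "Re (avg_sign e g) = 2 * pi * e / Z_quenched e g"
      unfolding avg_sign_def Z_part_val[OF adm]
      by (simp add: Re_divide_of_real flip: of_real_mult)
    show "Re (avg_sign e g) \<le> pi / 2 * e + 0 * e\<^sup>2"
    proof (cases "(\<lambda>t. cmod (f_eps e (g t)) * norm (vector_derivative g (at t))) integrable_on {0..1}")
      case True
      have q: "4 \<le> Z_quenched e g" using quenched_ge4[OF adm _ True] e by auto
      have "2 * pi * e / Z_quenched e g \<le> 2 * pi * e / 4"
        using q e pi_gt_zero by (intro divide_left_mono) auto
      then show ?thesis unfolding av by simp
    next
      case False
      hence "Z_quenched e g = 0" unfolding Z_quenched_def by (simp add: not_integrable_integral)
      then show ?thesis unfolding av using e pi_gt_zero by simp
    qed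
   qed
   show ?thesis by (intro exI[of _ 0] exI[of _ 1]) (use main in auto)
  qed
qed

end
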